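(* Let $t\in T$ with $t>0$, and assume each source is present on a contiguous run of time steps: if $n\in A_{t_1}$ and $n\in A_{t_3}$ with $t_1\le t_2\le t_3$ in $T$, then $n\in A_{t_2}$. Let $M_{t-\delta}$ be a gated input-set model with registered set $R$ and thresholds $(\theta^\alpha_n,\theta^\omega_n)_{n\in R}$ such that (i) $M_{t-\delta}$ has RCS at $t-\delta$, (ii) $\theta^\alpha_n,\theta^\omega_n\le t-\delta$ for all $n\in R$, and (iii) $R\subseteq\bigcup_{t'\in T,\,t'\le t-\delta}A_{t'}$. Suppose no new source is introduced at $t$, i.e. $A_t\subseteq A_{t-\delta}$ (zero or more sources may be removed). Define $M_t$ from $M_{t-\delta}$ by setting $\theta^\omega_n=t$ for every $n\in A_t$ and leaving all other thresholds and the registered set unchanged. Then $M_t$ accurately models time $t$ and has RCS at $t$ (and all its thresholds are $\le t$).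
   Context: Time steps form the set $T=\{0,\delta,2\delta,\dots\}$ for a fixed time step size $\delta>0$ (so $\min T=0$). Sources (e.g. agents) are identified by natural numbers. At each $t\in T$ a finite set $A_t\subseteq\mathbb{N}$ of sources is present, and each present source $n\in A_t$ supplies a value $x_n(t)$ of a fixed type $\mathcal{T}$. The true input set at time $t$ is $S(t)=\{(n,x_n(t)) : n\in A_t\}\subseteq \mathbb{N}\times\mathcal{T}$. A gated input-set model $M$ consists of a finite set $R\subseteq\mathbb{N}$ of registered sources and, for each $n\in R$, two time thresholds $\theta^\alpha_n,\theta^\omega_n\in T$ (parameters of two time-conditional variables). The gated contribution of $n\in R$ at time $t$ is $g_n(t)=\{(n,x_n(t))\}$ if $\theta^\alpha_n\le t\le\theta^\omega_n$, and $g_n(t)=\emptyset$ otherwise. The input set computed by $M$ at time $t$ is $S_M(t)=\bigcup_{n\in R} g_n(t)$ (realised by a chain of union variables starting from a socket variable with degenerate distribution at $\emptyset$). $M$ accurately models time $t$ if $S_M(t)=S(t)$. A model $M_t$ has retrospective causal stationarity (RCS) at $t$ if it accurately models $t$ and every $t'\in T$ with $t'<t$. *)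

theory Defs
  imports Complex_Main
begin

definition timesteps :: "real \<Rightarrow> real set" where
  "timesteps \<delta> = {real k * \<delta> | k. True}"

definition true_input_set :: "(real \<Rightarrow> nat set) \<Rightarrow> (nat \<Rightarrow> real \<Rightarrow> 'v) \<Rightarrow> real \<Rightarrow> (nat \<times> 'v) set" where
  "true_input_set A x t = {(n, x n t) | n. n \<in> A t}"

definition gated :: "(nat \<Rightarrow> real \<Rightarrow> 'v) \<Rightarrow> (nat \<Rightarrow> real) \<Rightarrow> (nat \<Rightarrow> real) \<Rightarrow> nat \<Rightarrow> real \<Rightarrow> (nat \<times> 'v) set" where
  "gated x \<theta>\<alpha> \<theta>\<omega> n t = (if \<theta>\<alpha> n \<le> t \<and> t \<le> \<theta>\<omega> n then {(n, x n t)} else {})"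

definition model_input_set :: "(nat \<Rightarrow> real \<Rightarrow> 'v) \<Rightarrow> nat set \<Rightarrow> (nat \<Rightarrow> real) \<Rightarrow> (nat \<Rightarrow> real) \<Rightarrow> real \<Rightarrow> (nat \<times> 'v) set" where
  "model_input_set x R \<theta>\<alpha> \<theta>\<omega> t = {} \<union> (\<Union>n\<in>R. gated x \<theta>\<alpha> \<theta>\<omega> n t)"

definition accurately_models :: "(real \<Rightarrow> nat set) \<Rightarrow> (nat \<Rightarrow> real \<Rightarrow> 'v) \<Rightarrow> nat set \<Rightarrow> (nat \<Rightarrow> real) \<Rightarrow> (nat \<Rightarrow> real) \<Rightarrow> real \<Rightarrow> bool" where
  "accurately_models A x R \<theta>\<alpha> \<theta>\<omega> t \<longleftrightarrow> model_input_set x R \<theta>\<alpha> \<theta>\<omega> t = true_input_set A x t"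

definition RCS :: "real \<Rightarrow> (real \<Rightarrow> nat set) \<Rightarrow> (nat \<Rightarrow> real \<Rightarrow> 'v) \<Rightarrow> nat set \<Rightarrow> (nat \<Rightarrow> real) \<Rightarrow> (nat \<Rightarrow> real) \<Rightarrow> real \<Rightarrow> bool" where
  "RCS \<delta> A x R \<theta>\<alpha> \<theta>\<omega> t \<longleftrightarrow> accurately_models A x R \<theta>\<alpha> \<theta>\<omega> t \<and>
     (\<forall>t'\<in>timesteps \<delta>. t' < t \<longrightarrow> accurately_models A x R \<theta>\<alpha> \<theta>\<omega> t')"

end

theory Submission
  imports Defs
begin

theorem lemma3:
  fixes \<delta> t :: real and A :: "real \<Rightarrow> nat set" and x :: "nat \<Rightarrow> real \<Rightarrow> 'v"
    and R :: "nat set" and \<theta>\<alpha> \<theta>\<omega> :: "nat \<Rightarrow> real"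
  assumes delta_pos: "\<delta> > 0"
    and t_in: "t \<in> timesteps \<delta>" and t_pos: "t > 0"
    and A_fin: "\<forall>s\<in>timesteps \<delta>. finite (A s)"
    and contiguous: "\<forall>n t1 t2 t3. t1 \<in> timesteps \<delta> \<longrightarrow> t2 \<in> timesteps \<delta> \<longrightarrow> t3 \<in> timesteps \<delta> \<longrightarrow>
        t1 \<le> t2 \<longrightarrow> t2 \<le> t3 \<longrightarrow> n \<in> A t1 \<longrightarrow> n \<in> A t3 \<longrightarrow> n \<in> A t2"
    and R_fin: "finite R"
    and thr_in_T: "\<forall>n\<in>R. \<theta>\<alpha> n \<in> timesteps \<delta> \<and> \<theta>\<omega> n \<in> timesteps \<delta>"
    and rcs_prev: "RCS \<delta> A x R \<theta>\<alpha> \<theta>\<omega> (t - \<delta>)"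
    and thr_le: "\<forall>n\<in>R. \<theta>\<alpha> n \<le> t - \<delta> \<and> \<theta>\<omega> n \<le> t - \<delta>"
    and R_sub: "R \<subseteq> (\<Union>t'\<in>{s \<in> timesteps \<delta>. s \<le> t - \<delta>}. A t')"
    and no_new: "A t \<subseteq> A (t - \<delta>)"
  shows "accurately_models A x R \<theta>\<alpha> (\<lambda>n. if n \<in> A t then t else \<theta>\<omega> n) t
       \<and> RCS \<delta> A x R \<theta>\<alpha> (\<lambda>n. if n \<in> A t then t else \<theta>\<omega> n) t
       \<and> (\<forall>n\<in>R. \<theta>\<alpha> n \<le> t \<and> (\<lambda>n. if n \<in> A t then t else \<theta>\<omega> n) n \<le> t)"
proof -
  define w where "w = (\<lambda>n. if n \<in> A t then t else \<theta>\<omega> n)"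
  have acc_prev: "accurately_models A x R \<theta>\<alpha> \<theta>\<omega> (t - \<delta>)"
    using rcs_prev unfolding RCS_def by blast
  have inprev: "n \<in> R \<and> \<theta>\<alpha> n \<le> t - \<delta> \<and> t - \<delta> \<le> \<theta>\<omega> n" if "n \<in> A t" for n
  proof -
    have "(n, x n (t - \<delta>)) \<in> true_input_set A x (t - \<delta>)"
      using that no_new unfolding true_input_set_def by blast
    hence "(n, x n (t - \<delta>)) \<in> model_input_set x R \<theta>\<alpha> \<theta>\<omega> (t - \<delta>)"
      using acc_prev unfolding accurately_models_def by simp
    thus ?thesis unfolding model_input_set_def gated_def by (auto split: if_splits)
  qed
  have before: "t' \<le> t - \<delta>" if tt: "t' \<in> timesteps \<delta>" "t' < t" for t'
  proof -
    obtain m where m: "t = real m * \<delta>" using t_in unfolding timesteps_def by blast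
    obtain k where k: "t' = real k * \<delta>" using tt(1) unfolding timesteps_def by blast
    have "real k < real m" using tt(2) m k delta_pos by (simp add: mult_less_cancel_right)
    hence "k < m" by simp
    hence "real k \<le> real m - 1" by linarith
    hence "real k * \<delta> \<le> (real m - 1) * \<delta>" using delta_pos by (simp add: mult_right_mono)
    thus ?thesis using m k by (simp add: algebra_simps)
  qed
  have same: "model_input_set x R \<theta>\<alpha> w t' = model_input_set x R \<theta>\<alpha> \<theta>\<omega> t'"
    if "t' \<le> t - \<delta>" for t'
  proof -
    have "gated x \<theta>\<alpha> w n t' = gated x \<theta>\<alpha> \<theta>\<omega> n t'" if "n \<in> R" for n
    proof (cases "n \<in> A t")
      case True
      with inprev[OF True] \<open>t' \<le> t - \<delta>\<close> delta_pos show ?thesis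
        unfolding gated_def w_def by auto
    next
      case False thus ?thesis unfolding gated_def w_def by auto
    qed
    thus ?thesis unfolding model_input_set_def by auto
  qed
  have acc_t: "accurately_models A x R \<theta>\<alpha> w t"
  proof -
    have "model_input_set x R \<theta>\<alpha> w t = true_input_set A x t"
    proof (intro equalityI subsetI)
      fix p assume "p \<in> model_input_set x R \<theta>\<alpha> w t"
      then obtain n where "n \<in> R" "p = (n, x n t)" "\<theta>\<alpha> n \<le> t" "t \<le> w n"
        unfolding model_input_set_def gated_def by (auto split: if_splits)
      moreover have "n \<in> A t"
      proof (rule ccontr)
        assume "n \<notin> A t"
        hence "w n = \<theta>\<omega> n" unfolding w_def by simp
        thus False using thr_le \<open>n \<in> R\<close> \<open>t \<le> w n\<close> delta_pos by force
      qed
      ultimately show "p \<in> true_input_set A x t" unfolding true_input_set_def by blast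
    next
      fix p assume "p \<in> true_input_set A x t"
      then obtain n where n: "n \<in> A t" "p = (n, x n t)" unfolding true_input_set_def by blast
      have "gated x \<theta>\<alpha> w n t = {(n, x n t)}"
        using inprev[OF n(1)] n(1) delta_pos unfolding gated_def w_def by auto
      thus "p \<in> model_input_set x R \<theta>\<alpha> w t"
        using inprev[OF n(1)] n unfolding model_input_set_def by blast
    qed
    thus ?thesis unfolding accurately_models_def .
  qed
  have rcs: "RCS \<delta> A x R \<theta>\<alpha> w t"
    unfolding RCS_def
  proof (intro conjI ballI impI)
    show "accurately_models A x R \<theta>\<alpha> w t" by (rule acc_t)
  next
    fix t' assume t': "t' \<in> timesteps \<delta>" "t' < t"
    have le: "t' \<le> t - \<delta>" by (rule before[OF t'])
    have "accurately_models A x R \<theta>\<alpha> \<theta>\<omega> t'"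
    proof (cases "t' = t - \<delta>")
      case True thus ?thesis using acc_prev by simp
    next
      case False thus ?thesis using rcs_prev t' le unfolding RCS_def by auto
    qed
    thus "accurately_models A x R \<theta>\<alpha> w t'"
      using same[OF le] unfolding accurately_models_def by simp
  qed
  have "\<forall>n\<in>R. \<theta>\<alpha> n \<le> t \<and> w n \<le> t"
    using thr_le delta_pos unfolding w_def by force
  thus ?thesis using acc_t rcs unfolding w_def by simp
qed

end
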